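(* Let $d \ge 3$ and let $a,b$ be integers with $1 \le a \le b < a(d-1)$. For every integer $k$ with $1 \le k \le a$, there exist a finite simple graph $H$, a vertex $r$ of $H$, and an additional "attachment edge" $e$ incident to $r$ (whose other endpoint lies outside $H$), such that every vertex of $H$ has degree at most $d$ when $e$ is counted at $r$, and: (i) if $e$ is given label $2k$, then there is an assignment of nonnegative integer labels to the edges of $H$ such that every vertex of $H$ is valid and every vertex of $H$ is joined to $r$ by a path of edges of $H$ with positive labels; (ii) for every integer $x$ with $0 \le x < 2k$, if $e$ is given label $x$, then no assignment of nonnegative integer labels to the edges of $H$ has both properties in (i).
   Context: Given fixed $a \le b$ and labels on the edges of $H$ and on $e$, a vertex $v$ of $H$ is called valid if the sum of the labels of all edges incident to $v$ (including $e$ if $v=r$) is even and lies in the interval $[2a,2b]$. *)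

theory Defs
  imports Main
begin

definition simple_graph :: "'v set \<Rightarrow> 'v set set \<Rightarrow> bool" where
  "simple_graph V E \<longleftrightarrow> finite V \<and>
     (\<forall>\<epsilon>\<in>E. \<exists>u w. u \<noteq> w \<and> u \<in> V \<and> w \<in> V \<and> \<epsilon> = {u, w})"

definition gdeg :: "'v set set \<Rightarrow> 'v \<Rightarrow> nat" where
  "gdeg E v = card {\<epsilon>\<in>E. v \<in> \<epsilon>}"

text \<open>Label sum at v: labels of edges of H incident to v, plus the label x of the
  attachment edge e if v = r.\<close>
definition label_sum :: "'v set set \<Rightarrow> 'v \<Rightarrow> nat \<Rightarrow> ('v set \<Rightarrow> nat) \<Rightarrow> 'v \<Rightarrow> nat" where
  "label_sum E r x f v = (\<Sum>\<epsilon>\<in>{\<epsilon>\<in>E. v \<in> \<epsilon>}. f \<epsilon>) + (if v = r then x else 0)"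

definition valid_vertex :: "nat \<Rightarrow> nat \<Rightarrow> 'v set set \<Rightarrow> 'v \<Rightarrow> nat \<Rightarrow> ('v set \<Rightarrow> nat) \<Rightarrow> 'v \<Rightarrow> bool" where
  "valid_vertex a b E r x f v \<longleftrightarrow>
     even (label_sum E r x f v) \<and> 2 * a \<le> label_sum E r x f v \<and> label_sum E r x f v \<le> 2 * b"

definition pos_adj :: "'v set set \<Rightarrow> ('v set \<Rightarrow> nat) \<Rightarrow> ('v \<times> 'v) set" where
  "pos_adj E f = {(u, w). {u, w} \<in> E \<and> 0 < f {u, w}}"

definition good_labelling_exists :: "nat \<Rightarrow> nat \<Rightarrow> 'v set \<Rightarrow> 'v set set \<Rightarrow> 'v \<Rightarrow> nat \<Rightarrow> bool" where
  "good_labelling_exists a b V E r x \<longleftrightarrow>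
     (\<exists>f :: 'v set \<Rightarrow> nat. (\<forall>v\<in>V. valid_vertex a b E r x f v) \<and>
        (\<forall>v\<in>V. (r, v) \<in> (pos_adj E f)\<^sup>*))"

end

theory Submission
  imports Defs
begin


lemma sg_edge_sub: "simple_graph V E \<Longrightarrow> \<epsilon> \<in> E \<Longrightarrow> \<epsilon> \<subseteq> V"
  unfolding simple_graph_def by fastforce

lemma sg_finE: "simple_graph V E \<Longrightarrow> finite E"
proof -
  assume sg: "simple_graph V E"
  hence "E \<subseteq> Pow V" using sg_edge_sub by blast
  moreover have "finite V" using sg simple_graph_def by blast
  ultimately show ?thesis using finite_subset by blast
qed

lemma relabel_sg:
  assumes sg: "simple_graph V E" and inj: "inj_on h V"
  shows "simple_graph (h ` V) ((`) h ` E)"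
  unfolding simple_graph_def
proof (intro conjI ballI)
  show "finite (h ` V)" using sg simple_graph_def by auto
next
  fix e' assume "e' \<in> (`) h ` E"
  then obtain e where e: "e \<in> E" "e' = h ` e" by blast
  then obtain u w where uw: "u \<noteq> w" "u \<in> V" "w \<in> V" "e = {u,w}" using sg simple_graph_def by metis
  have "h u \<noteq> h w" using inj uw by (simp add: inj_on_eq_iff)
  thus "\<exists>u w. u \<noteq> w \<and> u \<in> h ` V \<and> w \<in> h ` V \<and> e' = {u, w}"
    using uw e by auto
qed

lemma relabel_setEq:
  assumes sg: "simple_graph V E" and inj: "inj_on h V" and v: "v \<in> V"
  shows "{e'\<in>(`) h ` E. h v \<in> e'} = (`) h ` {e\<in>E. v \<in> e}"
proof -
  have "\<And>e. e \<in> E \<Longrightarrow> (h v \<in> h ` e) = (v \<in> e)"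
    using sg_edge_sub[OF sg] inj v by (meson inj_on_image_mem_iff)
  thus ?thesis by blast
qed

lemma relabel_injE:
  assumes sg: "simple_graph V E" and inj: "inj_on h V"
  shows "inj_on ((`) h) E"
proof -
  have "inj_on ((`) h) (Pow V)" using inj by (simp add: inj_on_image_Pow)
  moreover have "E \<subseteq> Pow V" using sg_edge_sub[OF sg] by blast
  ultimately show ?thesis using inj_on_subset by blast
qed

lemma relabel_gdeg:
  assumes sg: "simple_graph V E" and inj: "inj_on h V" and v: "v \<in> V"
  shows "gdeg ((`) h ` E) (h v) = gdeg E v"
  unfolding gdeg_def relabel_setEq[OF assms]
  by (rule card_image) (rule inj_on_subset[OF relabel_injE[OF sg inj]], blast)

lemma relabel_feas:
  assumes sg: "simple_graph V E" and inj: "inj_on h V" and rV: "r \<in> V"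
    and F: "good_labelling_exists a b V E r x"
  shows "good_labelling_exists a b (h ` V) ((`) h ` E) (h r) x"
proof -
  obtain f where fv: "\<forall>v\<in>V. valid_vertex a b E r x f v"
    and fc: "\<forall>v\<in>V. (r, v) \<in> (pos_adj E f)\<^sup>*"
    using F unfolding good_labelling_exists_def by blast
  define g where "g = inv_into V h"
  define f' where "f' = (\<lambda>e. f (g ` e))"
  have f'E: "f' (h ` e) = f e" if e: "e \<in> E" for e
  proof -
    have "g ` h ` e = e" unfolding g_def by (rule inv_into_image_cancel[OF inj sg_edge_sub[OF sg e]])
    thus ?thesis unfolding f'_def by simp
  qed
  have injE: "inj_on ((`) h) E" by (rule relabel_injE[OF sg inj])
  have ls: "label_sum ((`) h ` E) (h r) x f' (h v) = label_sum E r x f v" if v: "v \<in> V" for v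
  proof -
    have "(\<Sum>e\<in>{e'\<in>(`) h ` E. h v \<in> e'}. f' e) = (\<Sum>e\<in>{e\<in>E. v \<in> e}. f' (h ` e))"
      unfolding relabel_setEq[OF sg inj v]
      using sum.reindex[OF inj_on_subset[OF injE, of "{e\<in>E. v \<in> e}"]] by (simp add: o_def)
    also have "\<dots> = (\<Sum>e\<in>{e\<in>E. v \<in> e}. f e)" by (rule sum.cong) (auto intro: f'E)
    moreover have "(h v = h r) = (v = r)" using inj v rV by (simp add: inj_on_eq_iff)
    ultimately show ?thesis unfolding label_sum_def by presburger
  qed
  have reach: "(h r, h v) \<in> (pos_adj ((`) h ` E) f')\<^sup>*" if "(r, v) \<in> (pos_adj E f)\<^sup>*" for v
    using that
  proof (induction rule: rtrancl_induct)
    case base then show ?case by simp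
  next
    case (step y z)
    have "{y,z} \<in> E" "0 < f {y,z}" using step(2) unfolding pos_adj_def by auto
    hence "(h y, h z) \<in> pos_adj ((`) h ` E) f'"
    proof -
      have "{h y, h z} \<in> (`) h ` E" using \<open>{y,z} \<in> E\<close> by (intro image_eqI[where x="{y,z}"]) auto
      thus ?thesis unfolding pos_adj_def using f'E[of "{y,z}"] \<open>{y,z} \<in> E\<close> \<open>0 < f {y,z}\<close> by simp
    qed
    then show ?case using step(3) by (meson rtrancl.rtrancl_into_rtrancl)
  qed
  show ?thesis unfolding good_labelling_exists_def
  proof (intro exI[of _ f'] conjI ballI)
    fix v' assume "v' \<in> h ` V"
    then obtain v where v: "v \<in> V" "v' = h v" by blast
    show "valid_vertex a b ((`) h ` E) (h r) x f' v'"
      using fv v ls unfolding valid_vertex_def by simp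
    show "(h r, v') \<in> (pos_adj ((`) h ` E) f')\<^sup>*" using reach fc v by simp
  qed
qed

lemma relabel_iff:
  assumes sg: "simple_graph V E" and inj: "inj_on h V" and rV: "r \<in> V"
  shows "good_labelling_exists a b (h ` V) ((`) h ` E) (h r) x = good_labelling_exists a b V E r x"
proof
  assume F: "good_labelling_exists a b (h ` V) ((`) h ` E) (h r) x"
  define g where "g = inv_into V h"
  have ig: "inj_on g (h ` V)" unfolding g_def by (simp add: inj_on_inv_into)
  have "good_labelling_exists a b (g ` h ` V) ((`) g ` (`) h ` E) (g (h r)) x"
    by (rule relabel_feas[OF relabel_sg[OF sg inj] ig _ F]) (use rV in auto)
  moreover have "g ` h ` V = V" unfolding g_def by (rule inv_into_image_cancel[OF inj]) simp
  moreover have "(`) g ` (`) h ` E = E"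
  proof -
    have "\<And>e. e \<in> E \<Longrightarrow> g ` h ` e = e" unfolding g_def
      using inv_into_image_cancel[OF inj sg_edge_sub[OF sg]] by simp
    thus ?thesis by (simp add: image_image)
  qed
  moreover have "g (h r) = r" unfolding g_def using inj rV by simp
  ultimately show "good_labelling_exists a b V E r x" by simp
next
  assume "good_labelling_exists a b V E r x"
  thus "good_labelling_exists a b (h ` V) ((`) h ` E) (h r) x" by (rule relabel_feas[OF sg inj rV])
qed



locale dj =
  fixes VF EF rF VG EG rG
  assumes sgF: "simple_graph VF EF" and sgG: "simple_graph VG EG"
    and rF: "rF \<in> VF" and rG: "rG \<in> VG" and dis: "VF \<inter> VG = {}"
begin

abbreviation "E \<equiv> EF \<union> EG \<union> {{rF, rG}}"
abbreviation "V \<equiv> VF \<union> VG"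

lemma rne: "rF \<noteq> rG" using rF rG dis by blast

lemma eF_sub: "e \<in> EF \<Longrightarrow> e \<subseteq> VF" using sg_edge_sub[OF sgF] .
lemma eG_sub: "e \<in> EG \<Longrightarrow> e \<subseteq> VG" using sg_edge_sub[OF sgG] .

lemma eF_ne: "e \<in> EF \<Longrightarrow> e \<noteq> {}" using sgF unfolding simple_graph_def by fastforce
lemma eG_ne: "e \<in> EG \<Longrightarrow> e \<noteq> {}" using sgG unfolding simple_graph_def by fastforce

lemma edge_notF: "{rF, rG} \<notin> EF"
proof
  assume "{rF, rG} \<in> EF"
  hence "rG \<in> VF" using eF_sub by auto
  thus False using rG dis by auto
qed
lemma edge_notG: "{rF, rG} \<notin> EG"
proof
  assume "{rF, rG} \<in> EG"
  hence "rF \<in> VG" using eG_sub by auto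
  thus False using rF dis by auto
qed
lemma FG_dis: "EF \<inter> EG = {}"
proof (rule ccontr)
  assume "EF \<inter> EG \<noteq> {}"
  then obtain e where e: "e \<in> EF" "e \<in> EG" by auto
  hence "e \<subseteq> VF \<inter> VG" using eF_sub eG_sub by auto
  thus False using dis eF_ne e by auto
qed

lemma finEF: "finite EF" using sg_finE[OF sgF] .
lemma finEG: "finite EG" using sg_finE[OF sgG] .

lemma sg: "simple_graph V E"
  unfolding simple_graph_def
proof (intro conjI ballI)
  show "finite V" using sgF sgG unfolding simple_graph_def by simp
next
  fix e assume "e \<in> E"
  then consider "e \<in> EF" | "e \<in> EG" | "e = {rF,rG}" by auto
  thus "\<exists>u w. u \<noteq> w \<and> u \<in> V \<and> w \<in> V \<and> e = {u, w}"
  proof cases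
    case 1 then obtain u w where "u \<noteq> w" "u \<in> VF" "w \<in> VF" "e = {u,w}" using sgF unfolding simple_graph_def by meson
    then show ?thesis by auto
  next
    case 2 then obtain u w where "u \<noteq> w" "u \<in> VG" "w \<in> VG" "e = {u,w}" using sgG unfolding simple_graph_def by meson
    then show ?thesis by auto
  next
    case 3 then show ?thesis using rne rF rG by auto
  qed
qed

lemma incF: "v \<in> VF \<Longrightarrow> {e\<in>E. v \<in> e} = {e\<in>EF. v \<in> e} \<union> (if v = rF then {{rF,rG}} else {})"
  using eG_sub dis rne rF rG by auto

lemma incG: "v \<in> VG \<Longrightarrow> {e\<in>E. v \<in> e} = {e\<in>EG. v \<in> e} \<union> (if v = rG then {{rF,rG}} else {})"
  using eF_sub dis rne rF rG by auto

lemma sumF: "v \<in> VF \<Longrightarrow> (\<Sum>e\<in>{e\<in>E. v \<in> e}. f e) = (\<Sum>e\<in>{e\<in>EF. v \<in> e}. f e) + (if v = rF then f {rF,rG} else 0)"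
  unfolding incF using finEF edge_notF by (auto simp: sum.union_disjoint)

lemma sumG: "v \<in> VG \<Longrightarrow> (\<Sum>e\<in>{e\<in>E. v \<in> e}. f e) = (\<Sum>e\<in>{e\<in>EG. v \<in> e}. f e) + (if v = rG then f {rF,rG} else 0)"
  unfolding incG using finEG edge_notG by (auto simp: sum.union_disjoint)

lemma cardF: "v \<in> VF \<Longrightarrow> gdeg E v = gdeg EF v + (if v = rF then 1 else 0)"
  unfolding gdeg_def incF using finEF edge_notF by (auto simp: card_Un_disjoint)

lemma cardG: "v \<in> VG \<Longrightarrow> gdeg E v = gdeg EG v + (if v = rG then 1 else 0)"
  unfolding gdeg_def incG using finEG edge_notG by (auto simp: card_Un_disjoint)

lemma lsF: "v \<in> VF \<Longrightarrow> label_sum E rF x f v = label_sum EF rF (x + f {rF,rG}) f v"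
  unfolding label_sum_def by (subst sumF) auto

lemma lsG: "v \<in> VG \<Longrightarrow> label_sum E rF x f v = label_sum EG rG (f {rF,rG}) f v"
  unfolding label_sum_def using dis rF by (subst sumG) auto

lemma decomp:
  assumes "(rF, w) \<in> (pos_adj E f)\<^sup>*"
  shows "(w \<in> VF \<and> (rF, w) \<in> (pos_adj EF f)\<^sup>*) \<or> (w \<in> VG \<and> 0 < f {rF,rG} \<and> (rG, w) \<in> (pos_adj EG f)\<^sup>*)"
  using assms
proof (induction rule: rtrancl_induct)
  case base then show ?case using rF by simp
next
  case (step y z)
  have yz: "{y,z} \<in> E" "0 < f {y,z}" using step(2) unfolding pos_adj_def by auto
  show ?case
  proof (cases "{y,z} \<in> EF")
    case True
    hence "y \<in> VF" "z \<in> VF" using eF_sub by auto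
    hence "y \<notin> VG" using dis by auto
    hence "(rF, y) \<in> (pos_adj EF f)\<^sup>*" using step(3) by auto
    moreover have "(y,z) \<in> pos_adj EF f" using True yz pos_adj_def by auto
    ultimately show ?thesis using \<open>z \<in> VF\<close> by (meson rtrancl.rtrancl_into_rtrancl)
  next
    case nF: False
    show ?thesis
    proof (cases "{y,z} \<in> EG")
      case True
      hence "y \<in> VG" "z \<in> VG" using eG_sub by auto
      hence "y \<notin> VF" using dis by auto
      hence "(rG, y) \<in> (pos_adj EG f)\<^sup>*" "0 < f {rF,rG}" using step(3) by auto
      moreover have "(y,z) \<in> pos_adj EG f" using True yz pos_adj_def by auto
      ultimately show ?thesis using \<open>z \<in> VG\<close> by (meson rtrancl.rtrancl_into_rtrancl)
    next
      case False
      hence e: "{y,z} = {rF,rG}" using nF yz by auto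
      hence "(y = rF \<and> z = rG) \<or> (y = rG \<and> z = rF)" by (auto simp: doubleton_eq_iff)
      thus ?thesis
      proof
        assume "y = rF \<and> z = rG"
        thus ?thesis using yz e rG by auto
      next
        assume "y = rG \<and> z = rF"
        thus ?thesis using rF by auto
      qed
    qed
  qed
qed

lemma feas_iff:
  "good_labelling_exists a b V E rF x \<longleftrightarrow>
   (\<exists>y>0. good_labelling_exists a b VG EG rG y \<and> good_labelling_exists a b VF EF rF (x + y))"
proof
  assume A: "good_labelling_exists a b V E rF x"
  from A[unfolded good_labelling_exists_def] obtain f where fv: "\<forall>v\<in>V. valid_vertex a b E rF x f v"
    and fc: "\<forall>v\<in>V. (rF, v) \<in> (pos_adj E f)\<^sup>*"
    by (elim exE conjE)
  define y where "y = f {rF,rG}"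
  have ypos: "0 < y" proof -
    have "(rF, rG) \<in> (pos_adj E f)\<^sup>*" using fc rG by blast
    from decomp[OF this] show ?thesis unfolding y_def using rG dis by blast
  qed
  have G: "good_labelling_exists a b VG EG rG y"
    unfolding good_labelling_exists_def
  proof (intro exI[of _ f] conjI ballI)
    fix v assume v: "v \<in> VG"
    have "valid_vertex a b E rF x f v" using fv v by blast
    thus "valid_vertex a b EG rG y f v" unfolding valid_vertex_def y_def lsG[OF v] .
    show "(rG, v) \<in> (pos_adj EG f)\<^sup>*" proof -
      have "(rF, v) \<in> (pos_adj E f)\<^sup>*" using fc v by blast
      from decomp[OF this] show ?thesis using v dis by blast
    qed
  qed
  have F: "good_labelling_exists a b VF EF rF (x + y)"
    unfolding good_labelling_exists_def
  proof (intro exI[of _ f] conjI ballI)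
    fix v assume v: "v \<in> VF"
    have "valid_vertex a b E rF x f v" using fv v by blast
    thus "valid_vertex a b EF rF (x + y) f v" unfolding valid_vertex_def y_def lsF[OF v] .
    show "(rF, v) \<in> (pos_adj EF f)\<^sup>*" proof -
      have "(rF, v) \<in> (pos_adj E f)\<^sup>*" using fc v by blast
      from decomp[OF this] show ?thesis using v dis by blast
    qed
  qed
  show "\<exists>y>0. good_labelling_exists a b VG EG rG y \<and> good_labelling_exists a b VF EF rF (x + y)"
    using ypos G F by blast
next
  assume "\<exists>y>0. good_labelling_exists a b VG EG rG y \<and> good_labelling_exists a b VF EF rF (x + y)"
  then obtain y where ypos: "0 < y" and GG: "good_labelling_exists a b VG EG rG y"
    and FF: "good_labelling_exists a b VF EF rF (x + y)" by (elim exE conjE)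
  from GG[unfolded good_labelling_exists_def] obtain fG where
    fGv: "\<forall>v\<in>VG. valid_vertex a b EG rG y fG v" and fGc: "\<forall>v\<in>VG. (rG, v) \<in> (pos_adj EG fG)\<^sup>*"
    by (elim exE conjE)
  from FF[unfolded good_labelling_exists_def] obtain fF where
    fFv: "\<forall>v\<in>VF. valid_vertex a b EF rF (x+y) fF v" and fFc: "\<forall>v\<in>VF. (rF, v) \<in> (pos_adj EF fF)\<^sup>*"
    by (elim exE conjE)
  define f where "f = (\<lambda>e. if e \<in> EF then fF e else if e \<in> EG then fG e else y)"
  have fy: "f {rF,rG} = y" unfolding f_def using edge_notF edge_notG by simp
  have lF: "label_sum EF rF z f v = label_sum EF rF z fF v" for z v
    unfolding label_sum_def f_def by (rule arg_cong[where f="\<lambda>s. s + _"], rule sum.cong) auto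
  have lG: "label_sum EG rG z f v = label_sum EG rG z fG v" for z v
    unfolding label_sum_def f_def using FG_dis by (intro arg_cong[where f="\<lambda>s. s + _"] sum.cong) auto
  have sF: "pos_adj EF fF \<subseteq> pos_adj E f" unfolding pos_adj_def f_def by auto
  have sG: "pos_adj EG fG \<subseteq> pos_adj E f" unfolding pos_adj_def f_def using FG_dis by auto
  have e: "(rF, rG) \<in> pos_adj E f" unfolding pos_adj_def using fy ypos by auto
  show "good_labelling_exists a b V E rF x"
    unfolding good_labelling_exists_def
  proof (intro exI[of _ f] conjI ballI)
    fix v assume "v \<in> V"
    then consider (F) "v \<in> VF" | (G) "v \<in> VG" by blast
    then show "valid_vertex a b E rF x f v"
    proof cases
      case F then show ?thesis using fFv lsF[OF F] lF fy unfolding valid_vertex_def by simp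
    next
      case G then show ?thesis using fGv lsG[OF G] lG fy unfolding valid_vertex_def by simp
    qed
    show "(rF, v) \<in> (pos_adj E f)\<^sup>*"
    proof (cases "v \<in> VF")
      case True
      then show ?thesis using fFc rtrancl_mono[OF sF] by blast
    next
      case False
      hence "v \<in> VG" using \<open>v \<in> V\<close> by blast
      hence "(rG, v) \<in> (pos_adj E f)\<^sup>*" using fGc rtrancl_mono[OF sG] by blast
      then show ?thesis using e by (meson converse_rtrancl_into_rtrancl)
    qed
  qed
qed

end



type_synonym gad = "nat set \<times> nat set set \<times> nat"

definition gV :: "gad \<Rightarrow> nat set" where "gV G = fst G"
definition gE :: "gad \<Rightarrow> nat set set" where "gE G = fst (snd G)"
definition gr :: "gad \<Rightarrow> nat" where "gr G = snd (snd G)"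

lemma g_simps[simp]: "gV (V,E,r) = V" "gE (V,E,r) = E" "gr (V,E,r) = r"
  by (simp_all add: gV_def gE_def gr_def)

definition sh :: "nat \<Rightarrow> gad \<Rightarrow> gad" where
  "sh N G = ((+) N ` gV G, (`) ((+) N) ` gE G, N + gr G)"

definition att :: "gad \<Rightarrow> gad \<Rightarrow> gad" where
  "att F G = (let G' = sh (Suc (Max (gV F))) G in
     (gV F \<union> gV G', gE F \<union> gE G' \<union> {{gr F, gr G'}}, gr F))"

definition FE :: "nat \<Rightarrow> nat \<Rightarrow> gad \<Rightarrow> nat \<Rightarrow> bool" where
  "FE a b G x = good_labelling_exists a b (gV G) (gE G) (gr G) x"

definition Inv :: "nat \<Rightarrow> gad \<Rightarrow> bool" where
  "Inv d G = (simple_graph (gV G) (gE G) \<and> gr G \<in> gV G \<and>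
     (\<forall>v\<in>gV G. gdeg (gE G) v + (if v = gr G then 1 else 0) \<le> d))"

definition rdeg :: "gad \<Rightarrow> nat" where "rdeg G = gdeg (gE G) (gr G)"

lemma inj_sh: "inj_on ((+) (N::nat)) A" by (simp add: inj_on_def)

lemma att_dj:
  assumes "Inv d F" "Inv d' G"
  defines "N \<equiv> Suc (Max (gV F))"
  shows "dj (gV F) (gE F) (gr F) ((+) N ` gV G) ((`) ((+) N) ` gE G) (N + gr G)"
proof
  show "simple_graph (gV F) (gE F)" "gr F \<in> gV F" using assms(1) Inv_def by auto
  show "simple_graph ((+) N ` gV G) ((`) ((+) N) ` gE G)"
    using relabel_sg[OF _ inj_sh] assms(2) Inv_def by auto
  show "N + gr G \<in> (+) N ` gV G" using assms(2) Inv_def by auto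
  have fin: "finite (gV F)" using assms(1) unfolding Inv_def simple_graph_def by auto
  have "\<forall>v\<in>gV F. v < N" unfolding N_def using Max_ge[OF fin] by (simp add: le_imp_less_Suc)
  thus "gV F \<inter> (+) N ` gV G = {}" by force
qed

lemma att_eq: "att F G = (gV F \<union> (+) (Suc (Max (gV F))) ` gV G,
   gE F \<union> (`) ((+) (Suc (Max (gV F)))) ` gE G \<union> {{gr F, Suc (Max (gV F)) + gr G}}, gr F)"
  unfolding att_def sh_def Let_def by simp

lemma att_FE:
  assumes F: "Inv d F" and G: "Inv d' G"
  shows "FE a b (att F G) x \<longleftrightarrow> (\<exists>y>0. FE a b G y \<and> FE a b F (x + y))"
proof -
  define N where "N = Suc (Max (gV F))"
  interpret dj "gV F" "gE F" "gr F" "(+) N ` gV G" "(`) ((+) N) ` gE G" "N + gr G"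
    using att_dj[OF F G] N_def by simp
  have "good_labelling_exists a b ((+) N ` gV G) ((`) ((+) N) ` gE G) ((+) N (gr G)) y = FE a b G y" for y
    unfolding FE_def by (rule relabel_iff[OF _ inj_sh]) (use G Inv_def in auto)
  thus ?thesis unfolding FE_def att_eq N_def[symmetric] using feas_iff[of a b x] by simp
qed

lemma att_Inv:
  assumes F: "Inv d F" and G: "Inv d G" and deg: "rdeg F + 2 \<le> d"
  shows "Inv d (att F G)" "rdeg (att F G) = rdeg F + 1"
proof -
  define N where "N = Suc (Max (gV F))"
  interpret dj "gV F" "gE F" "gr F" "(+) N ` gV G" "(`) ((+) N) ` gE G" "N + gr G"
    using att_dj[OF F G] N_def by simp
  have sgG: "simple_graph (gV G) (gE G)" and rG: "gr G \<in> gV G" using G Inv_def by auto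
  have rdF: "rdeg (att F G) = rdeg F + 1"
    unfolding rdeg_def att_eq N_def[symmetric] using cardF[of "gr F"] rF by simp
  show "rdeg (att F G) = rdeg F + 1" by (rule rdF)
  show "Inv d (att F G)"
    unfolding Inv_def
  proof (intro conjI ballI)
    show "simple_graph (gV (att F G)) (gE (att F G))" unfolding att_eq N_def[symmetric] using sg by simp
    show "gr (att F G) \<in> gV (att F G)" unfolding att_eq using rF by simp
  next
    fix v assume v: "v \<in> gV (att F G)"
    hence "v \<in> gV F \<or> v \<in> (+) N ` gV G" unfolding att_eq N_def by simp
    thus "gdeg (gE (att F G)) v + (if v = gr (att F G) then 1 else 0) \<le> d"
    proof
      assume vF: "v \<in> gV F"
      have "gdeg (gE (att F G)) v = gdeg (gE F) v + (if v = gr F then 1 else 0)"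
        unfolding att_eq N_def[symmetric] using cardF[OF vF] by simp
      moreover have "gdeg (gE F) v + (if v = gr F then 1 else 0) \<le> d" using F vF Inv_def by auto
      ultimately show ?thesis using deg unfolding rdeg_def att_eq by auto
    next
      assume "v \<in> (+) N ` gV G"
      then obtain u where u: "u \<in> gV G" "v = N + u" by auto
      have vne: "v \<noteq> gr F" using u rF dis by blast
      have "gdeg (gE (att F G)) v = gdeg ((`) ((+) N) ` gE G) v + (if v = N + gr G then 1 else 0)"
        unfolding att_eq N_def[symmetric] using cardG u by simp
      also have "gdeg ((`) ((+) N) ` gE G) v = gdeg (gE G) u"
        using relabel_gdeg[OF sgG inj_sh u(1)] u by simp
      finally have "gdeg (gE (att F G)) v = gdeg (gE G) u + (if u = gr G then 1 else 0)" using u by simp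
      moreover have "gdeg (gE G) u + (if u = gr G then 1 else 0) \<le> d" using G u Inv_def by auto
      ultimately show ?thesis using vne unfolding att_eq by simp
    qed
  qed
qed

lemma att_root: "gr (att F G) = gr F" unfolding att_eq by simp



definition Sv :: gad where "Sv = ({0}, {}, 0)"
definition Tr :: gad where "Tr = ({0,1,2}, {{0,1},{0,2},{1,2}}, 0)"

lemma Sv_FE: "FE a b Sv x \<longleftrightarrow> even x \<and> 2*a \<le> x \<and> x \<le> 2*b"
  unfolding FE_def Sv_def good_labelling_exists_def valid_vertex_def label_sum_def by simp

lemma Sv_Inv: "1 \<le> d \<Longrightarrow> Inv d Sv" and Sv_rdeg: "rdeg Sv = 0"
  unfolding Inv_def Sv_def rdeg_def gdeg_def simple_graph_def by simp_all

lemma Tr_inc: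
  "{e \<in> {{0,1},{0,2},{1,2}}. (0::nat) \<in> e} = {{0,1},{0,2}}"
  "{e \<in> {{0,1},{0,2},{1,2}}. (1::nat) \<in> e} = {{0,1},{1,2}}"
  "{e \<in> {{0,1},{0,2},{1,2}}. (2::nat) \<in> e} = {{0,2},{1,2}}"
  by auto

lemma Tr_ne: "{0,1} \<noteq> ({0,2}::nat set)" "{0,1} \<noteq> ({1,2}::nat set)" "{0,2} \<noteq> ({1,2}::nat set)"
  by (auto simp: doubleton_eq_iff)

lemma Tr_ls:
  "label_sum {{0,1},{0,2},{1,2}} 0 y f 0 = f {0,1} + f {0,2} + y"
  "label_sum {{0,1},{0,2},{1,2}} 0 y f 1 = f {0,1} + f {1,2}"
  "label_sum {{0,1},{0,2},{1,2}} 0 y f (2::nat) = f {0,2} + f {1,2}"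
  unfolding label_sum_def Tr_inc using Tr_ne by simp_all

lemma Tr_Inv: "3 \<le> d \<Longrightarrow> Inv d Tr"
  unfolding Inv_def Tr_def gdeg_def simple_graph_def using Tr_inc Tr_ne by auto

lemma Tr_even: "FE a b Tr y \<Longrightarrow> even y"
proof -
  assume "FE a b Tr y"
  then obtain f where fv: "\<forall>v\<in>{0::nat,1,2}. valid_vertex a b {{0,1},{0,2},{1,2}} 0 y f v"
    unfolding FE_def Tr_def good_labelling_exists_def g_simps by blast
  have "valid_vertex a b {{0,1},{0,2},{1,2}} 0 y f (0::nat)" "valid_vertex a b {{0,1},{0,2},{1,2}} 0 y f (1::nat)"
    "valid_vertex a b {{0,1},{0,2},{1,2}} 0 y f (2::nat)" using fv by simp_all
  hence "even (f {0,1} + f {0,2} + y)" "even (f {0,1} + f {1,2})" "even (f {0,2} + f {1,2})"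
    unfolding valid_vertex_def Tr_ls by simp_all
  thus "even y" by presburger
qed

lemma Tr_real: "2 \<le> a \<Longrightarrow> a \<le> b \<Longrightarrow> FE a b Tr 2"
proof -
  assume a: "2 \<le> a" "a \<le> b"
  define f where "f = (\<lambda>e::nat set. if e = {1,2} then a + 1 else a - 1)"
  have fv: "f {0,1} = a - 1" "f {0,2} = a - 1" "f {1,2} = a + 1" unfolding f_def using Tr_ne by auto
  have V: "valid_vertex a b {{0,1},{0,2},{1,2}} 0 2 f v" if "v \<in> {0::nat,1,2}" for v
  proof -
    have "v = 0 \<or> v = 1 \<or> v = 2" using that by simp
    thus ?thesis unfolding valid_vertex_def using Tr_ls[of 2 f] fv a by auto
  qed
  have p: "(0,1) \<in> pos_adj {{0,1},{0,2},{1,2}} f" "(0,2) \<in> pos_adj {{0::nat,1},{0,2},{1,2}} f"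
    unfolding pos_adj_def using fv a by auto
  have C: "(0, v) \<in> (pos_adj {{0,1},{0,2},{1,2}} f)\<^sup>*" if "v \<in> {0::nat,1,2}" for v
  proof -
    have "v = 0 \<or> v = 1 \<or> v = 2" using that by simp
    thus ?thesis using p by auto
  qed
  show ?thesis unfolding FE_def Tr_def good_labelling_exists_def g_simps
    using V C by blast
qed

definition LoG :: "nat \<Rightarrow> nat \<Rightarrow> nat \<Rightarrow> nat \<Rightarrow> gad \<Rightarrow> bool" where
  "LoG a b d l G = (Inv d G \<and> 1 \<le> l \<and> FE a b G (2*l) \<and> (\<forall>y. FE a b G y \<longrightarrow> 0 < y \<longrightarrow> 2*l \<le> y))"
definition LoS :: "nat \<Rightarrow> nat \<Rightarrow> nat \<Rightarrow> nat \<Rightarrow> gad \<Rightarrow> bool" where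
  "LoS a b d l G = (Inv d G \<and> 1 \<le> l \<and> FE a b G (2*l) \<and> (\<forall>y. FE a b G y \<longrightarrow> 2*l \<le> y))"
definition HiG :: "nat \<Rightarrow> nat \<Rightarrow> nat \<Rightarrow> nat \<Rightarrow> gad \<Rightarrow> bool" where
  "HiG a b d h G = (Inv d G \<and> FE a b G (2*h) \<and> (\<forall>x. FE a b G x \<longrightarrow> x \<le> 2*h))"

lemma LoS_LoG: "LoS a b d l G \<Longrightarrow> LoG a b d l G"
  unfolding LoS_def LoG_def by auto

lemma Tr_LoG: "2 \<le> a \<Longrightarrow> a \<le> b \<Longrightarrow> 3 \<le> d \<Longrightarrow> LoG a b d 1 Tr"
  unfolding LoG_def using Tr_Inv Tr_real Tr_even by fastforce

lemma Sv_LoS: "1 \<le> a \<Longrightarrow> a \<le> b \<Longrightarrow> 1 \<le> d \<Longrightarrow> LoS a b d a Sv"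
  unfolding LoS_def using Sv_Inv Sv_FE by auto

lemma Sv_HiG: "a \<le> b \<Longrightarrow> 1 \<le> d \<Longrightarrow> HiG a b d b Sv"
  unfolding HiG_def using Sv_Inv Sv_FE by auto

lemma hi_att:
  assumes F: "HiG a b d h F" and G: "LoG a b d l G" and lh: "l \<le> h" and deg: "rdeg F + 2 \<le> d"
  shows "HiG a b d (h - l) (att F G)" "rdeg (att F G) = rdeg F + 1"
proof -
  have IF: "Inv d F" using F unfolding HiG_def by (rule conjunct1)
  have IG: "Inv d G" using G unfolding LoG_def by (rule conjunct1)
  show "rdeg (att F G) = rdeg F + 1" using att_Inv[OF IF IG deg] by simp
  have I: "Inv d (att F G)" using att_Inv[OF IF IG deg] by simp
  have R: "FE a b (att F G) (2*(h-l))"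
  proof -
    have e: "2*(h-l) + 2*l = 2*h" using lh by simp
    have "0 < 2*l" "FE a b G (2*l)" using G unfolding LoG_def by auto
    moreover have "FE a b F (2*(h-l) + 2*l)" unfolding e using F unfolding HiG_def by auto
    ultimately show ?thesis unfolding att_FE[OF IF IG] by blast
  qed
  have U: "x \<le> 2*(h-l)" if "FE a b (att F G) x" for x
  proof -
    have "\<exists>y>0. FE a b G y \<and> FE a b F (x+y)" using that att_FE[OF IF IG] by simp
    then obtain y where y: "0 < y" "FE a b G y" "FE a b F (x+y)" by blast
    have "2*l \<le> y" using G y unfolding LoG_def by auto
    moreover have "x + y \<le> 2*h" using F y unfolding HiG_def by auto
    ultimately show ?thesis by simp
  qed
  show "HiG a b d (h - l) (att F G)" unfolding HiG_def using I R U by blast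
qed

lemma lo_Q:
  assumes P: "HiG a b d h P" and h: "1 \<le> h" "h < a" and ab: "a \<le> b" and d: "2 \<le> d"
  shows "LoS a b d (a - h) (att Sv P)"
proof -
  have IS: "Inv d Sv" using Sv_Inv d by simp
  have IP: "Inv d P" using P unfolding HiG_def by simp
  have I: "Inv d (att Sv P)" using att_Inv[OF IS IP] Sv_rdeg d by simp
  have R: "FE a b (att Sv P) (2*(a-h))"
  proof -
    have e: "2*(a-h) + 2*h = 2*a" using h by simp
    have "0 < 2*h" "FE a b P (2*h)" using P h unfolding HiG_def by auto
    moreover have "FE a b Sv (2*(a-h) + 2*h)" unfolding e Sv_FE using ab by simp
    ultimately show ?thesis unfolding att_FE[OF IS IP] by blast
  qed
  have L: "2*(a-h) \<le> x" if "FE a b (att Sv P) x" for x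
  proof -
    have "\<exists>y>0. FE a b P y \<and> FE a b Sv (x+y)" using that att_FE[OF IS IP] by simp
    then obtain y where y: "0 < y" "FE a b P y" "FE a b Sv (x+y)" by blast
    have "y \<le> 2*h" using P y unfolding HiG_def by auto
    moreover have "2*a \<le> x + y" using y(3) unfolding Sv_FE by simp
    ultimately show ?thesis by simp
  qed
  show ?thesis unfolding LoS_def using I R L h by auto
qed

definition attL :: "gad \<Rightarrow> nat \<Rightarrow> gad" where "attL F m = ((\<lambda>F. att F Sv) ^^ m) F"

lemma hi_attL:
  assumes F: "HiG a b d h F" and deg: "rdeg F + m + 1 \<le> d" and mh: "m*a \<le> h"
    and a: "1 \<le> a" "a \<le> b"
  shows "HiG a b d (h - m*a) (attL F m) \<and> rdeg (attL F m) = rdeg F + m"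
  using deg mh
proof (induction m)
  case 0 then show ?case using F unfolding attL_def by simp
next
  case (Suc m)
  have IH: "HiG a b d (h - m*a) (attL F m)" "rdeg (attL F m) = rdeg F + m" using Suc by auto
  have d1: "1 \<le> d" using Suc.prems by simp
  have e: "attL F (Suc m) = att (attL F m) Sv" unfolding attL_def by simp
  have la: "a \<le> h - m*a" using Suc.prems(2) by (simp add: algebra_simps)
  have dg: "rdeg (attL F m) + 2 \<le> d" using Suc.prems(1) IH(2) by simp
  have H: "HiG a b d (h - m*a - a) (att (attL F m) Sv)" "rdeg (att (attL F m) Sv) = rdeg (attL F m) + 1"
    using hi_att[OF IH(1) LoS_LoG[OF Sv_LoS[OF a d1]] la dg] by auto
  have "h - m*a - a = h - Suc m * a" by (simp add: algebra_simps)
  then show ?case unfolding e using H IH(2) by simp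
qed



fun wk :: "nat \<Rightarrow> nat \<Rightarrow> nat \<Rightarrow> nat" where
  "wk a ep 0 = 1"
| "wk a ep (Suc n) = (if ep < wk a ep n then wk a ep n - ep else wk a ep n + a - ep)"

fun Wg :: "nat \<Rightarrow> nat \<Rightarrow> nat \<Rightarrow> nat \<Rightarrow> gad" where
  "Wg a ep j 0 = Tr"
| "Wg a ep j (Suc n) = (if wk a ep n = ep then Sv else
     att Sv (attL (att Sv (Wg a ep j n)) (if ep < wk a ep n then j else Suc j)))"

fun Lg :: "nat \<Rightarrow> gad \<Rightarrow> nat \<Rightarrow> gad" where
  "Lg j H 0 = att Sv (attL (att Sv H) j)"
| "Lg j H (Suc v) = att Sv (attL (att (att Sv (Lg j H v)) H) j)"

lemma wk_bounds: "ep < a \<Longrightarrow> 1 \<le> wk a ep n \<and> wk a ep n \<le> a"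
  by (induction n) auto

lemma wk_zero: "wk a 0 n = 1"
  by (induction n) auto

lemma wk_mod: assumes "ep < a" shows "wk a ep n - 1 = (n * (a - ep)) mod a"
proof (induction n)
  case 0 then show ?case by simp
next
  case (Suc n)
  define w where "w = wk a ep n"
  have wb: "1 \<le> w" "w \<le> a" using wk_bounds[OF assms] w_def by auto
  have step: "wk a ep (Suc n) - 1 = ((w - 1) + (a - ep)) mod a"
  proof (cases "ep < w")
    case True
    hence "wk a ep (Suc n) - 1 = w - 1 - ep" using w_def by simp
    moreover have "(w - 1) + (a - ep) = (w - 1 - ep) + a" using True assms by simp
    moreover have "w - 1 - ep < a" using wb by simp
    ultimately show ?thesis by simp
  next
    case False
    hence "wk a ep (Suc n) - 1 = w - 1 + a - ep" using w_def wb by simp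
    moreover have "w - 1 + a - ep < a" using False wb assms by simp
    moreover have "w - 1 + a - ep = (w - 1) + (a - ep)" using assms by simp
    ultimately show ?thesis by simp
  qed
  have "((w - 1) + (a - ep)) mod a = ((n * (a - ep)) mod a + (a - ep)) mod a" using Suc w_def by simp
  also have "\<dots> = (n * (a - ep) + (a - ep)) mod a" by (simp add: mod_add_left_eq)
  also have "n * (a - ep) + (a - ep) = Suc n * (a - ep)" by simp
  hence "(n * (a - ep) + (a - ep)) mod a = (Suc n * (a - ep)) mod a" by (rule arg_cong)
  finally show ?case using step \<open>(n * (a - ep) + (a - ep)) mod a = (Suc n * (a - ep)) mod a\<close> by simp
qed

lemma wk_final: assumes "ep < a" shows "wk a ep (a - 1) = ep + 1"
proof -
  have e: "(a - 1) * (a - ep) = a * (a - ep - 1) + ep"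
  proof -
    define t where "t = a - ep - 1"
    have t: "a = ep + 1 + t" using assms t_def by simp
    show ?thesis unfolding t by (simp add: algebra_simps)
  qed
  have "wk a ep (a - 1) - 1 = ep" using wk_mod[OF assms, of "a - 1"] unfolding e using assms by simp
  moreover have "1 \<le> wk a ep (a - 1)" using wk_bounds[OF assms] by auto
  ultimately show ?thesis by simp
qed

context
  fixes a b d :: nat
  assumes d3: "3 \<le> d" and a2: "2 \<le> a" and ab: "a \<le> b" and bd: "b < a * (d - 1)"
begin

definition "ep = (b - a) mod a"
definition "jj = (b - a) div a"

lemma bdec: "b = a + jj * a + ep"
  unfolding ep_def jj_def using ab by simp

lemma ep_lt: "ep < a" unfolding ep_def using a2 by simp

lemma jj_le: "jj + 3 \<le> d"
proof -
  have "jj * a \<le> b - a" unfolding jj_def by (rule div_times_less_eq_dividend)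
  also have "b - a < a * (d - 2)" using bd ab d3 by (simp add: algebra_simps diff_mult_distrib2)
  finally have "jj * a < (d - 2) * a" by (simp add: mult.commute)
  hence "jj < d - 2" by simp
  thus ?thesis using d3 by simp
qed

lemma Wg_lo: "LoG a b d (wk a ep n) (Wg a ep jj n)"
proof (induction n)
  case 0 show ?case using Tr_LoG[OF a2 ab d3] by simp
next
  case (Suc n)
  define w where "w = wk a ep n"
  have wb: "1 \<le> w" "w \<le> a" using wk_bounds[OF ep_lt] w_def by auto
  have d1: "1 \<le> d" and d2: "2 \<le> d" using d3 by auto
  show ?case
  proof (cases "w = ep")
    case True
    then show ?thesis using LoS_LoG[OF Sv_LoS[of a b d]] a2 ab d1 ep_lt w_def by simp
  next
    case False
    define m where "m = (if ep < w then jj else Suc jj)"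
    have ge: "Wg a ep jj (Suc n) = att Sv (attL (att Sv (Wg a ep jj n)) m)"
      using False w_def m_def by simp
    have F0: "HiG a b d (b - w) (att Sv (Wg a ep jj n))" "rdeg (att Sv (Wg a ep jj n)) = 1"
      using hi_att[OF Sv_HiG[OF ab d1] Suc.IH[folded w_def]] wb ab d2 Sv_rdeg by auto
    have ma: "m * a \<le> b - w" using wb bdec ep_lt False unfolding m_def by auto
    have md: "rdeg (att Sv (Wg a ep jj n)) + m + 1 \<le> d" using F0(2) jj_le unfolding m_def by auto
    have F1: "HiG a b d (b - w - m * a) (attL (att Sv (Wg a ep jj n)) m)"
      using hi_attL[OF F0(1) md ma] a2 ab by auto
    have hval: "b - w - m * a = (if ep < w then a + ep - w else ep - w)"
      using bdec wb ep_lt unfolding m_def by auto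
    have h1: "1 \<le> b - w - m * a" "b - w - m * a < a"
    proof -
      have "ep = 0 \<Longrightarrow> w = 1" using wk_zero w_def ep_def by simp
      thus "1 \<le> b - w - m * a" "b - w - m * a < a" unfolding hval using wb ep_lt False a2 by (cases "ep = 0"; auto)+
    qed
    have "LoS a b d (a - (b - w - m * a)) (Wg a ep jj (Suc n))"
      unfolding ge by (rule lo_Q[OF F1 h1 ab d2])
    moreover have "a - (b - w - m * a) = wk a ep (Suc n)"
      unfolding hval using w_def wb ep_lt False by auto
    ultimately show ?thesis using LoS_LoG by simp
  qed
qed

lemma H_lo: "LoG a b d (ep + 1) (Wg a ep jj (a - 1))"
  using Wg_lo[of "a - 1"] wk_final[OF ep_lt] by simp

lemma Lg_lo: "Suc v \<le> a - 1 \<Longrightarrow> LoS a b d (Suc v) (Lg jj (Wg a ep jj (a - 1)) v)"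
proof (induction v)
  case 0
  have d1: "1 \<le> d" and d2: "2 \<le> d" using d3 by auto
  have F0: "HiG a b d (b - (ep + 1)) (att Sv (Wg a ep jj (a - 1)))" "rdeg (att Sv (Wg a ep jj (a - 1))) = 1"
    using hi_att[OF Sv_HiG[OF ab d1] H_lo] bdec ab d2 Sv_rdeg a2 by auto
  have F1: "HiG a b d (b - (ep + 1) - jj * a) (attL (att Sv (Wg a ep jj (a - 1))) jj)"
    using hi_attL[OF F0(1)] F0(2) jj_le bdec a2 ab by auto
  have hv: "b - (ep + 1) - jj * a = a - 1" using bdec by simp
  have "LoS a b d (a - (a - 1)) (Lg jj (Wg a ep jj (a - 1)) 0)"
    using lo_Q[OF F1[unfolded hv] _ _ ab d2] a2 by simp
  then show ?case using a2 by simp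
next
  case (Suc v)
  have d1: "1 \<le> d" and d2: "2 \<le> d" using d3 by auto
  define H where "H = Wg a ep jj (a - 1)"
  define X where "X = Lg jj H v"
  have IH: "LoS a b d (Suc v) X" using Suc X_def H_def by simp
  have F0: "HiG a b d (b - Suc v) (att Sv X)" "rdeg (att Sv X) = 1"
    using hi_att[OF Sv_HiG[OF ab d1] LoS_LoG[OF IH]] Suc.prems bdec d2 Sv_rdeg by auto
  have F1: "HiG a b d (b - Suc v - (ep + 1)) (att (att Sv X) H)" "rdeg (att (att Sv X) H) = 2"
    using hi_att[OF F0(1) H_lo[folded H_def]] F0(2) Suc.prems bdec d3 by auto
  have F2: "HiG a b d (b - Suc v - (ep + 1) - jj * a) (attL (att (att Sv X) H) jj)"
    using hi_attL[OF F1(1)] F1(2) jj_le Suc.prems bdec a2 ab by auto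
  have hv: "b - Suc v - (ep + 1) - jj * a = a - v - 2" using bdec Suc.prems by simp
  have "LoS a b d (a - (a - v - 2)) (Lg jj H (Suc v))"
    using lo_Q[OF F2[unfolded hv] _ _ ab d2] Suc.prems X_def by simp
  moreover have "a - (a - v - 2) = Suc (Suc v)" using Suc.prems by simp
  ultimately show ?case using H_def by simp
qed

end



lemma LoS_goal:
  assumes "LoS a b d k G"
  shows "\<exists>(V :: nat set) E r. simple_graph V E \<and> r \<in> V \<and>
           (\<forall>v\<in>V. gdeg E v + (if v = r then 1 else 0) \<le> d) \<and>
           good_labelling_exists a b V E r (2 * k) \<and>
           (\<forall>x < 2 * k. \<not> good_labelling_exists a b V E r x)"
proof (intro exI conjI)
  have I: "Inv d G" and R: "FE a b G (2*k)" and L: "\<forall>y. FE a b G y \<longrightarrow> 2*k \<le> y"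
    using assms unfolding LoS_def by auto
  show "simple_graph (gV G) (gE G)" "gr G \<in> gV G"
    "\<forall>v\<in>gV G. gdeg (gE G) v + (if v = gr G then 1 else 0) \<le> d"
    using I unfolding Inv_def by auto
  show "good_labelling_exists a b (gV G) (gE G) (gr G) (2 * k)" using R unfolding FE_def by simp
  show "\<forall>x < 2 * k. \<not> good_labelling_exists a b (gV G) (gE G) (gr G) x"
    using L unfolding FE_def by (meson leD)
qed

theorem lemma3p6:
  fixes d a b k :: nat
  assumes "3 \<le> d" and "1 \<le> a" and "a \<le> b" and "b < a * (d - 1)"
    and "1 \<le> k" and "k \<le> a"
  shows "\<exists>(V :: nat set) E r. simple_graph V E \<and> r \<in> V \<and>
           (\<forall>v\<in>V. gdeg E v + (if v = r then 1 else 0) \<le> d) \<and>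
           good_labelling_exists a b V E r (2 * k) \<and>
           (\<forall>x < 2 * k. \<not> good_labelling_exists a b V E r x)"
proof (cases "k = a")
  case True
  have "LoS a b d a Sv" using Sv_LoS assms by simp
  then show ?thesis using LoS_goal True by blast
next
  case False
  hence a2: "2 \<le> a" using assms by simp
  have "Suc (k - 1) \<le> a - 1" using False assms by simp
  from Lg_lo[OF assms(1) a2 assms(3) assms(4) this]
  have "\<exists>G. LoS a b d (Suc (k - 1)) G" by blast
  moreover have "Suc (k - 1) = k" using assms by simp
  ultimately show ?thesis using LoS_goal by metis
qed


end
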